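(* Let $X$ be a locally convex topological space, and let $C_0(X)$ be the Banach space (with norm $\|f\|_{C_0(X)}=\max_{x\in X}|f(x)|$) of continuous $f:X\to\mathbb{R}$ such that $\{x\in X:|f(x)|>\varepsilon\}$ is compact for every $\varepsilon>0$. Let $\mathcal{M}(X)$ be the space of signed Borel measures on $X$ of bounded total variation, with total variation norm $\|\mu\|$. Let $K:X\times X\to\mathbb{R}$ satisfy $K(\cdot,x)\in C_0(X)$ for all $x\in X$ and $$\overline{\mathrm{span}}\{K(\cdot,x):x\in X\}=C_0(X)$$ (closure in $C_0(X)$). Define $$\mathcal{B}:=\Big\{f_\mu:=\int_X K(t,\cdot)\,d\mu(t):\ \mu\in\mathcal{M}(X)\Big\},\qquad \|f_\mu\|_{\mathcal{B}}:=\|\mu\|.$$ Then $\mathcal{B}$ is a pre-RKBS on $X$; that is, $\|\cdot\|_{\mathcal B}$ is well defined and $\mathcal{B}$ is a Banach space of functions on $X$ on which all point evaluation functionals are continuous, and for $f\in\mathcal{B}$, $\|f\|_{\mathcal B}=0$ if and only if $f$ vanishes everywhere on $X$.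
   Context: Standing assumptions of the paper for this setting: the dual of $C_0(X)$ is identified isometrically with $\mathcal{M}(X)$ via $T(f)=\int_X f\,d\mu$ with operator norm equal to $\|\mu\|$; and for all pairwise distinct $x_1,\dots,x_m\in X$ the matrix $K[{\bf x}]$ with entries $(K[{\bf x}])_{j,k}=K(x_k,x_j)$ is nonsingular. *)

theory Defs
  imports "HOL-Analysis.Analysis"
begin

definition C0 :: "('a::topological_space \<Rightarrow> real) set" where
  "C0 = {f. continuous_on UNIV f \<and> (\<forall>\<epsilon>>0. compact {x. \<bar>f x\<bar> > \<epsilon>})}"

definition C0_norm :: "('a::topological_space \<Rightarrow> real) \<Rightarrow> real" where
  "C0_norm f = (SUP x. \<bar>f x\<bar>)"

text \<open>A (finite, real-valued) signed Borel measure is a countably additive set function on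
  the Borel sets. Only its values on Borel sets matter.\<close>

definition signed_borel_measure :: "('a::topological_space set \<Rightarrow> real) \<Rightarrow> bool" where
  "signed_borel_measure \<nu> \<longleftrightarrow> \<nu> {} = 0 \<and>
     (\<forall>A::nat \<Rightarrow> 'a set. range A \<subseteq> sets borel \<and> disjoint_family A \<longrightarrow>
        (\<lambda>n. \<nu> (A n)) sums \<nu> (\<Union>n. A n))"

definition partition_sums :: "('a::topological_space set \<Rightarrow> real) \<Rightarrow> real set" where
  "partition_sums \<nu> = {(\<Sum>A\<in>P. \<bar>\<nu> A\<bar>) | P. finite P \<and> P \<subseteq> sets borel \<and> disjoint P \<and> \<Union>P = UNIV}"

definition tv_norm :: "('a::topological_space set \<Rightarrow> real) \<Rightarrow> real" where
  "tv_norm \<nu> = Sup (partition_sums \<nu>)"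

definition bounded_variation :: "('a::topological_space set \<Rightarrow> real) \<Rightarrow> bool" where
  "bounded_variation \<nu> \<longleftrightarrow> bdd_above (partition_sums \<nu>)"

definition Meas :: "('a::topological_space set \<Rightarrow> real) set" where
  "Meas = {\<nu>. signed_borel_measure \<nu> \<and> bounded_variation \<nu>}"

definition pos_var :: "('a::topological_space set \<Rightarrow> real) \<Rightarrow> 'a set \<Rightarrow> real" where
  "pos_var \<nu> A = Sup {\<nu> B | B. B \<in> sets borel \<and> B \<subseteq> A}"

definition neg_var :: "('a::topological_space set \<Rightarrow> real) \<Rightarrow> 'a set \<Rightarrow> real" where
  "neg_var \<nu> A = Sup {- \<nu> B | B. B \<in> sets borel \<and> B \<subseteq> A}"

definition jordan_pos :: "('a::topological_space set \<Rightarrow> real) \<Rightarrow> 'a measure" where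
  "jordan_pos \<nu> = measure_of UNIV (sets borel) (\<lambda>A. ennreal (pos_var \<nu> A))"

definition jordan_neg :: "('a::topological_space set \<Rightarrow> real) \<Rightarrow> 'a measure" where
  "jordan_neg \<nu> = measure_of UNIV (sets borel) (\<lambda>A. ennreal (neg_var \<nu> A))"

definition sintegral :: "('a::topological_space set \<Rightarrow> real) \<Rightarrow> ('a \<Rightarrow> real) \<Rightarrow> real" where
  "sintegral \<nu> f = integral\<^sup>L (jordan_pos \<nu>) f - integral\<^sup>L (jordan_neg \<nu>) f"

definition fmu :: "('a::topological_space \<Rightarrow> 'a \<Rightarrow> real) \<Rightarrow> ('a set \<Rightarrow> real) \<Rightarrow> 'a \<Rightarrow> real" where
  "fmu K \<mu> = (\<lambda>x. sintegral \<mu> (\<lambda>t. K t x))"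

definition Bspace :: "('a::topological_space \<Rightarrow> 'a \<Rightarrow> real) \<Rightarrow> ('a \<Rightarrow> real) set" where
  "Bspace K = {fmu K \<mu> | \<mu>. \<mu> \<in> Meas}"

text \<open>$\|f_\mu\|_B := \|\mu\|$ (meaningful once well-definedness is established).\<close>
definition normB :: "('a::topological_space \<Rightarrow> 'a \<Rightarrow> real) \<Rightarrow> ('a \<Rightarrow> real) \<Rightarrow> real" where
  "normB K f = tv_norm (SOME \<mu>. \<mu> \<in> Meas \<and> f = fmu K \<mu>)"

end

theory Submission imports Defs begin

lemma jp_sets: "sets (jordan_pos \<mu>) = sets borel" "space (jordan_pos \<mu>) = UNIV"
  "sets (jordan_neg \<mu>) = sets borel" "space (jordan_neg \<mu>) = UNIV"
  unfolding jordan_pos_def jordan_neg_def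
  by (simp_all add: sets_measure_of_conv space_measure_of_conv sets.sigma_sets_eq[of borel, simplified])

lemma jp_fin: "finite_measure (jordan_pos \<mu>)" "finite_measure (jordan_neg \<mu>)"
  by (rule finite_measureI, simp add: jordan_pos_def jordan_neg_def emeasure_measure_of_conv space_measure_of_conv)+

definition G :: "('a::topological_space \<Rightarrow> real) \<Rightarrow> bool" where
  "G f \<longleftrightarrow> continuous_on UNIV f \<and> (\<exists>B. \<forall>x. \<bar>f x\<bar> \<le> B)"

lemma G_int:
  assumes "G f" shows "integrable (jordan_pos \<mu>) f" "integrable (jordan_neg \<mu>) f"
proof -
  from assms obtain B where B: "\<forall>x. \<bar>f x\<bar> \<le> B" and c: "continuous_on UNIV f" by (auto simp: G_def)
  have m: "f \<in> borel_measurable (jordan_pos \<mu>)" "f \<in> borel_measurable (jordan_neg \<mu>)"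
    by (simp_all add: measurable_cong_sets[OF jp_sets(1) refl] measurable_cong_sets[OF jp_sets(3) refl] borel_measurable_continuous_onI c)
  show "integrable (jordan_pos \<mu>) f"
    by (rule finite_measure.integrable_const_bound[OF jp_fin(1), where B=B]) (use B m in auto)
  show "integrable (jordan_neg \<mu>) f"
    by (rule finite_measure.integrable_const_bound[OF jp_fin(2), where B=B]) (use B m in auto)
qed

lemma G_add: "G f \<Longrightarrow> G g \<Longrightarrow> G (\<lambda>x. f x + g x)"
  unfolding G_def
  apply (auto intro!: continuous_intros)
  subgoal for B B' by (rule exI[of _ "B + B'"]) (meson abs_triangle_ineq add_mono order_trans)
  done

lemma G_mult: "G f \<Longrightarrow> G (\<lambda>x. c * f x)"
  unfolding G_def
  apply (auto intro!: continuous_intros)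
  subgoal for B by (rule exI[of _ "\<bar>c\<bar> * B"]) (simp add: abs_mult mult_left_mono)
  done

lemma G_sum: "(\<And>i. i \<in> A \<Longrightarrow> G (f i)) \<Longrightarrow> G (\<lambda>x. \<Sum>i\<in>A. f i x)"
proof (induction A rule: infinite_finite_induct)
  case (infinite A) then show ?case by (auto simp: G_def)
next
  case empty then show ?case by (auto simp: G_def)
next
  case (insert a A) then show ?case by (simp add: G_add)
qed

lemma si_add: "G f \<Longrightarrow> G g \<Longrightarrow> sintegral \<mu> (\<lambda>x. f x + g x) = sintegral \<mu> f + sintegral \<mu> g"
  unfolding sintegral_def by (simp add: G_int Bochner_Integration.integral_add)

lemma si_mult: "sintegral \<mu> (\<lambda>x. c * f x) = c * sintegral \<mu> f"
  unfolding sintegral_def by (simp add: algebra_simps)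

lemma si_diff: "G f \<Longrightarrow> G g \<Longrightarrow> sintegral \<mu> (\<lambda>x. f x - g x) = sintegral \<mu> f - sintegral \<mu> g"
  using si_add[of f "\<lambda>x. - g x" \<mu>] G_mult[of g "-1"] si_mult[of \<mu> "-1" g] by simp

lemma si_sum: "(\<And>i. i \<in> A \<Longrightarrow> G (f i)) \<Longrightarrow> sintegral \<mu> (\<lambda>x. \<Sum>i\<in>A. f i x) = (\<Sum>i\<in>A. sintegral \<mu> (f i))"
proof (induction A rule: infinite_finite_induct)
  case (infinite A) then show ?case by (simp add: sintegral_def)
next
  case empty then show ?case by (simp add: sintegral_def)
next
  case (insert a A) then show ?case by (simp add: si_add G_sum)
qed

definition Cm :: "('a::topological_space set \<Rightarrow> real) \<Rightarrow> real" where
  "Cm \<mu> = measure (jordan_pos \<mu>) UNIV + measure (jordan_neg \<mu>) UNIV"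

lemma Cm_nonneg: "Cm \<mu> \<ge> 0" by (simp add: Cm_def)

lemma int_bound:
  assumes fin: "finite_measure M" and sp: "space M = UNIV" and i: "integrable M f" and B: "\<forall>x. \<bar>f x\<bar> \<le> B"
  shows "\<bar>integral\<^sup>L M f\<bar> \<le> measure M UNIV * B"
proof -
  have "\<bar>integral\<^sup>L M f\<bar> \<le> integral\<^sup>L M (\<lambda>x. \<bar>f x\<bar>)" by (rule integral_abs_bound)
  also have "\<dots> \<le> integral\<^sup>L M (\<lambda>x. B)"
    by (rule integral_mono) (use i B finite_measure.integrable_const[OF fin] in auto)
  also have "\<dots> = measure M UNIV * B" using sp by simp
  finally show ?thesis .
qed

lemma si_bound: assumes "G f" "\<forall>x. \<bar>f x\<bar> \<le> B" shows "\<bar>sintegral \<mu> f\<bar> \<le> Cm \<mu> * B"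
proof -
  have 1: "\<bar>integral\<^sup>L (jordan_pos \<mu>) f\<bar> \<le> measure (jordan_pos \<mu>) UNIV * B"
    by (rule int_bound[OF jp_fin(1) jp_sets(2) G_int(1)[OF assms(1)] assms(2)])
  have 2: "\<bar>integral\<^sup>L (jordan_neg \<mu>) f\<bar> \<le> measure (jordan_neg \<mu>) UNIV * B"
    by (rule int_bound[OF jp_fin(2) jp_sets(4) G_int(2)[OF assms(1)] assms(2)])
  show ?thesis using 1 2 unfolding sintegral_def Cm_def by (simp add: algebra_simps)
qed

lemma C0_G: assumes "f \<in> C0" shows "G f"
proof -
  have c: "continuous_on UNIV f" and k: "compact {x. \<bar>f x\<bar> > 1}" using assms by (auto simp: C0_def)
  have "compact (f ` {x. \<bar>f x\<bar> > 1})"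
    by (rule compact_continuous_image[OF continuous_on_subset[OF c] k]) auto
  then obtain B where B: "\<forall>y\<in>f ` {x. \<bar>f x\<bar> > 1}. norm y \<le> B"
    using compact_imp_bounded bounded_iff by metis
  have "\<forall>x. \<bar>f x\<bar> \<le> max B 1"
  proof
    fix x show "\<bar>f x\<bar> \<le> max B 1" using B[rule_format, of "f x"] by (cases "\<bar>f x\<bar> > 1") auto
  qed
  then show ?thesis using c by (auto simp: G_def)
qed

lemma G_norm: assumes "G f" shows "\<bar>f x\<bar> \<le> C0_norm f" "bdd_above (range (\<lambda>x. \<bar>f x\<bar>))"
proof -
  show b: "bdd_above (range (\<lambda>x. \<bar>f x\<bar>))" using assms by (auto simp: G_def bdd_above_def)
  show "\<bar>f x\<bar> \<le> C0_norm f" unfolding C0_norm_def by (rule cSUP_upper[OF _ b]) auto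
qed

lemma sup_scale:
  fixes g :: "'b \<Rightarrow> real"
  assumes "A \<noteq> {}" "bdd_above (g ` A)" "c \<ge> 0"
  shows "(SUP x\<in>A. c * g x) = c * (SUP x\<in>A. g x)"
proof (cases "c = 0")
  case True then show ?thesis using assms(1) by simp
next
  case False
  then have c: "c > 0" using assms(3) by simp
  have b2: "bdd_above ((\<lambda>x. c * g x) ` A)"
  proof -
    obtain M where "\<forall>x\<in>A. g x \<le> M" using assms(2) by (auto simp: bdd_above_def)
    then have "\<forall>x\<in>A. c * g x \<le> c * M" using c by simp
    then show ?thesis by (auto simp: bdd_above_def)
  qed
  show ?thesis
  proof (rule antisym)
    show "(SUP x\<in>A. c * g x) \<le> c * (SUP x\<in>A. g x)"
      by (rule cSUP_least[OF assms(1)]) (use c cSUP_upper[OF _ assms(2)] in auto)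
    have "(SUP x\<in>A. g x) \<le> (SUP x\<in>A. c * g x) / c"
    proof (rule cSUP_least[OF assms(1)])
      fix x assume "x \<in> A"
      then have "c * g x \<le> (SUP x\<in>A. c * g x)" using cSUP_upper[OF _ b2] by auto
      then show "g x \<le> (SUP x\<in>A. c * g x) / c" using c by (simp add: field_simps)
    qed
    then show "c * (SUP x\<in>A. g x) \<le> (SUP x\<in>A. c * g x)" using c by (simp add: field_simps)
  qed
qed

lemma C0_zero: "(\<lambda>x. 0) \<in> C0" "C0_norm (\<lambda>x. 0::real) = 0"
  by (auto simp: C0_def C0_norm_def)

lemma C0_scale: assumes "f \<in> C0" "c \<noteq> 0" shows "(\<lambda>x. c * f x) \<in> C0"
proof -
  have "\<And>\<epsilon>. \<epsilon> > 0 \<Longrightarrow> {x. \<bar>c * f x\<bar> > \<epsilon>} = {x. \<bar>f x\<bar> > \<epsilon> / \<bar>c\<bar>}"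
    using assms(2) by (auto simp: abs_mult field_simps)
  moreover have "\<And>\<epsilon>. \<epsilon> > 0 \<Longrightarrow> \<epsilon> / \<bar>c\<bar> > 0" using assms(2) by simp
  ultimately show ?thesis using assms(1) by (auto simp: C0_def intro!: continuous_intros)
qed

lemma C0_norm_scale: assumes "G f" shows "C0_norm (\<lambda>x. c * f x) = \<bar>c\<bar> * C0_norm f"
  unfolding C0_norm_def abs_mult using sup_scale[of UNIV "\<lambda>x. \<bar>f x\<bar>" "\<bar>c\<bar>"] G_norm(2)[OF assms] by simp

lemma C0_norm_nonneg: "G f \<Longrightarrow> C0_norm f \<ge> 0"
  using G_norm(1)[of f undefined] by linarith

definition UB :: "('a::topological_space \<Rightarrow> real) set" where
  "UB = {f\<in>C0. C0_norm f \<le> 1}"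

definition NN :: "('a::topological_space set \<Rightarrow> real) \<Rightarrow> real" where
  "NN \<mu> = (SUP f\<in>UB. \<bar>sintegral \<mu> f\<bar>)"

lemma UB_ne: "(\<lambda>x. 0) \<in> UB" "UB \<noteq> {}"
proof -
  show "(\<lambda>x. 0) \<in> UB" by (auto simp: UB_def C0_def C0_norm_def)
  then show "UB \<noteq> {}" by blast
qed

lemma UB_bound: "f \<in> UB \<Longrightarrow> \<bar>f x\<bar> \<le> 1" "f \<in> UB \<Longrightarrow> G f"
  using G_norm(1)[OF C0_G, of f x] by (auto simp: UB_def C0_G)

lemma N_bdd: "bdd_above ((\<lambda>f. \<bar>sintegral \<mu> f\<bar>) ` UB)"
proof -
  have "\<forall>f\<in>UB. \<bar>sintegral \<mu> f\<bar> \<le> Cm \<mu> * 1"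
    using si_bound UB_bound by blast
  then show ?thesis by (auto simp: bdd_above_def)
qed

lemma N_ge: "f \<in> UB \<Longrightarrow> \<bar>sintegral \<mu> f\<bar> \<le> NN \<mu>"
  unfolding NN_def by (rule cSUP_upper[OF _ N_bdd])

lemma N_nonneg: "NN \<mu> \<ge> 0"
  using N_ge[OF UB_ne(1), of \<mu>] by linarith

lemma N_le: "(\<And>f. f \<in> UB \<Longrightarrow> \<bar>sintegral \<mu> f\<bar> \<le> M) \<Longrightarrow> NN \<mu> \<le> M"
  unfolding NN_def by (rule cSUP_least[OF UB_ne(2)])

lemma N_op: assumes "f \<in> C0" shows "\<bar>sintegral \<mu> f\<bar> \<le> NN \<mu> * C0_norm f"
proof -
  have Gf: "G f" using C0_G assms by blast
  define n where "n = C0_norm f"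
  have n0: "n \<ge> 0" using C0_norm_nonneg[OF Gf] by (simp add: n_def)
  show ?thesis
  proof (cases "n = 0")
    case True
    then have "f = (\<lambda>x. 0 * f x)" using G_norm(1)[OF Gf] n_def by (auto intro!: ext)
    then have "sintegral \<mu> f = 0" using si_mult[of \<mu> 0 f] by simp
    then show ?thesis using N_nonneg[of \<mu>] C0_norm_nonneg[OF Gf] by simp
  next
    case False
    then have "(\<lambda>x. (1/n) * f x) \<in> UB"
      using C0_scale[OF assms, of "1/n"] C0_norm_scale[OF Gf, of "1/n"] n0 by (auto simp: UB_def n_def)
    then have "\<bar>(1/n) * sintegral \<mu> f\<bar> \<le> NN \<mu>" using N_ge si_mult by metis
    then show ?thesis using n0 False by (simp add: abs_mult field_simps n_def)
  qed
qed
theorem proposition2p1: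
  fixes K :: "'a::topological_space \<Rightarrow> 'a \<Rightarrow> real"
  assumes dual_isometric:
    "\<forall>\<mu>\<in>(Meas :: ('a set \<Rightarrow> real) set). (SUP f\<in>{f\<in>C0. C0_norm f \<le> 1}. \<bar>sintegral \<mu> f\<bar>) = tv_norm \<mu>"
  and dual_onto:
    "\<forall>T :: ('a \<Rightarrow> real) \<Rightarrow> real.
       (\<forall>f\<in>C0. \<forall>g\<in>C0. T (\<lambda>x. f x + g x) = T f + T g) \<and>
       (\<forall>c. \<forall>f\<in>C0. T (\<lambda>x. c * f x) = c * T f) \<and>
       (\<exists>C. \<forall>f\<in>C0. \<bar>T f\<bar> \<le> C * C0_norm f)
       \<longrightarrow> (\<exists>\<mu>\<in>Meas. \<forall>f\<in>C0. T f = sintegral \<mu> f)"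
  and nonsingular:
    "\<forall>(m::nat) (xs::nat \<Rightarrow> 'a). inj_on xs {..<m} \<longrightarrow>
       (\<forall>c::nat \<Rightarrow> real. (\<forall>j<m. (\<Sum>k<m. K (xs k) (xs j) * c k) = 0) \<longrightarrow> (\<forall>k<m. c k = 0))"
  and K_C0: "\<forall>x. (\<lambda>t. K t x) \<in> C0"
  and K_dense:
    "\<forall>f\<in>C0. \<forall>\<epsilon>>0. \<exists>(n::nat) (c::nat \<Rightarrow> real) (xs::nat \<Rightarrow> 'a).
       C0_norm (\<lambda>t. f t - (\<Sum>i<n. c i * K t (xs i))) < \<epsilon>"
  shows
    \<comment> \<open>the norm of B is well defined\<close>
    "(\<forall>\<mu>\<in>Meas. \<forall>\<nu>\<in>Meas. fmu K \<mu> = fmu K \<nu> \<longrightarrow> tv_norm \<mu> = tv_norm \<nu>) \<and>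
     \<comment> \<open>B is a linear space of functions on X\<close>
     (\<lambda>x. 0) \<in> Bspace K \<and>
     (\<forall>f\<in>Bspace K. \<forall>g\<in>Bspace K. (\<lambda>x. f x + g x) \<in> Bspace K) \<and>
     (\<forall>c. \<forall>f\<in>Bspace K. (\<lambda>x. c * f x) \<in> Bspace K) \<and>
     \<comment> \<open>normB is a norm on B\<close>
     (\<forall>f\<in>Bspace K. normB K f \<ge> 0) \<and>
     (\<forall>f\<in>Bspace K. \<forall>g\<in>Bspace K. normB K (\<lambda>x. f x + g x) \<le> normB K f + normB K g) \<and>
     (\<forall>c. \<forall>f\<in>Bspace K. normB K (\<lambda>x. c * f x) = \<bar>c\<bar> * normB K f) \<and>
     \<comment> \<open>completeness\<close>
     (\<forall>F::nat \<Rightarrow> 'a \<Rightarrow> real. (\<forall>n. F n \<in> Bspace K) \<and>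
        (\<forall>\<epsilon>>0. \<exists>N. \<forall>m\<ge>N. \<forall>n\<ge>N. normB K (\<lambda>x. F m x - F n x) < \<epsilon>) \<longrightarrow>
        (\<exists>f\<in>Bspace K. (\<lambda>n. normB K (\<lambda>x. F n x - f x)) \<longlonglongrightarrow> 0)) \<and>
     \<comment> \<open>point evaluations are continuous\<close>
     (\<forall>x. \<exists>C. \<forall>f\<in>Bspace K. \<bar>f x\<bar> \<le> C * normB K f) \<and>
     \<comment> \<open>norm zero iff the function vanishes everywhere\<close>
     (\<forall>f\<in>Bspace K. normB K f = 0 \<longleftrightarrow> (\<forall>x. f x = 0))"
proof -
  let ?L = "sintegral :: ('a set \<Rightarrow> real) \<Rightarrow> ('a \<Rightarrow> real) \<Rightarrow> real"
  have KG: "G (\<lambda>t. K t x)" for x using K_C0 C0_G by blast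
  have C0nb: "\<forall>x. \<bar>f x\<bar> \<le> C0_norm f" if "f \<in> C0" for f using G_norm(1)[OF C0_G[OF that]] by blast
  have rep: "\<exists>la\<in>Meas. \<forall>f\<in>C0. sintegral la f = a * sintegral \<mu> f + b * sintegral \<nu> f"
    for a b :: real and \<mu> \<nu> :: "'a set \<Rightarrow> real"
  proof -
    let ?T = "\<lambda>f. a * sintegral \<mu> f + b * sintegral \<nu> f"
    have "\<forall>f\<in>C0. \<forall>g\<in>C0. ?T (\<lambda>x. f x + g x) = ?T f + ?T g"
      by (auto simp: si_add C0_G algebra_simps)
    moreover have "\<forall>c. \<forall>f\<in>C0. ?T (\<lambda>x. c * f x) = c * ?T f"
      by (auto simp: si_mult algebra_simps)
    moreover have "\<exists>C. \<forall>f\<in>C0. \<bar>?T f\<bar> \<le> C * C0_norm f"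
    proof (intro exI ballI)
      fix f :: "'a \<Rightarrow> real" assume f: "f \<in> C0"
      have 1: "\<bar>sintegral \<mu> f\<bar> \<le> Cm \<mu> * C0_norm f" by (rule si_bound[OF C0_G[OF f] C0nb[OF f]])
      have 2: "\<bar>sintegral \<nu> f\<bar> \<le> Cm \<nu> * C0_norm f" by (rule si_bound[OF C0_G[OF f] C0nb[OF f]])
      have "\<bar>?T f\<bar> \<le> \<bar>a\<bar> * \<bar>sintegral \<mu> f\<bar> + \<bar>b\<bar> * \<bar>sintegral \<nu> f\<bar>"
        by (metis abs_mult abs_triangle_ineq)
      also have "\<dots> \<le> \<bar>a\<bar> * (Cm \<mu> * C0_norm f) + \<bar>b\<bar> * (Cm \<nu> * C0_norm f)"
        using 1 2 by (intro add_mono mult_left_mono) auto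
      finally show "\<bar>?T f\<bar> \<le> (\<bar>a\<bar> * Cm \<mu> + \<bar>b\<bar> * Cm \<nu>) * C0_norm f" by (simp add: algebra_simps)
    qed
    ultimately have "\<exists>la\<in>Meas. \<forall>f\<in>C0. ?T f = sintegral la f"
      using dual_onto[rule_format, of ?T] by blast
    then show ?thesis by metis
  qed
  have fmu_comb: "fmu K la = (\<lambda>x. a * fmu K \<mu> x + b * fmu K \<nu> x)"
    if "\<forall>f\<in>C0. sintegral la f = a * sintegral \<mu> f + b * sintegral \<nu> f" for la \<mu> \<nu> a b
    using that K_C0 by (auto simp: fmu_def)
  have wd: "\<forall>f\<in>C0. sintegral \<mu> f = sintegral \<nu> f" if eq: "fmu K \<mu> = fmu K \<nu>" for \<mu> \<nu>
  proof
    fix f :: "'a \<Rightarrow> real" assume f: "f \<in> C0"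
    define d where "d = sintegral \<mu> f - sintegral \<nu> f"
    have "\<bar>d\<bar> \<le> 0 + e" if e: "e > 0" for e
    proof -
      define \<epsilon> where "\<epsilon> = e / (Cm \<mu> + Cm \<nu> + 1)"
      have \<epsilon>0: "\<epsilon> > 0" using e Cm_nonneg[of \<mu>] Cm_nonneg[of \<nu>] by (simp add: \<epsilon>_def)
      obtain n :: nat and c :: "nat \<Rightarrow> real" and xs :: "nat \<Rightarrow> 'a" where app: "C0_norm (\<lambda>t. f t - (\<Sum>i<n. c i * K t (xs i))) < \<epsilon>"
        using K_dense f \<epsilon>0 by blast
      define p where "p = (\<lambda>t. \<Sum>i<n. c i * K t (xs i))"
      define h where "h = (\<lambda>t. f t - p t)"
      have Gp: "G p" unfolding p_def by (rule G_sum) (rule G_mult[OF KG])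
      have Gh: "G h" unfolding h_def using G_add[OF C0_G[OF f] G_mult[OF Gp, of "-1"]] by simp
      have hb: "\<forall>t. \<bar>h t\<bar> \<le> \<epsilon>" using G_norm(1)[OF Gh] app unfolding h_def p_def
        by (meson less_imp_le order_trans)
      have Lp: "sintegral \<rho> p = (\<Sum>i<n. c i * fmu K \<rho> (xs i))" for \<rho>
        unfolding p_def by (subst si_sum) (auto simp: G_mult KG si_mult fmu_def)
      have fe: "f = (\<lambda>t. h t + p t)" by (simp add: h_def)
      have Lf: "sintegral \<rho> f = sintegral \<rho> h + sintegral \<rho> p" for \<rho>
        by (subst fe) (rule si_add[OF Gh Gp])
      have "d = sintegral \<mu> h - sintegral \<nu> h" using Lf[of \<mu>] Lf[of \<nu>] Lp[of \<mu>] Lp[of \<nu>] eq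
        by (simp add: d_def)
      then have "\<bar>d\<bar> \<le> Cm \<mu> * \<epsilon> + Cm \<nu> * \<epsilon>"
        using si_bound[OF Gh hb, of \<mu>] si_bound[OF Gh hb, of \<nu>] by linarith
      also have "\<dots> = (Cm \<mu> + Cm \<nu>) * \<epsilon>" by (simp add: algebra_simps)
      also have "\<dots> \<le> (Cm \<mu> + Cm \<nu> + 1) * \<epsilon>" using \<epsilon>0 by simp
      also have "\<dots> = e" using Cm_nonneg[of \<mu>] Cm_nonneg[of \<nu>] by (simp add: \<epsilon>_def)
      finally show ?thesis by simp
    qed
    then have "\<bar>d\<bar> \<le> 0" by (rule field_le_epsilon)
    then show "sintegral \<mu> f = sintegral \<nu> f" by (simp add: d_def)
  qed
  have tvN: "tv_norm \<mu> = NN \<mu>" if "\<mu> \<in> Meas" for \<mu> :: "'a set \<Rightarrow> real"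
    using dual_isometric that by (simp add: NN_def UB_def)
  have NN_cong: "NN \<mu> = NN \<nu>" if "\<forall>f\<in>C0. sintegral \<mu> f = sintegral \<nu> f" for \<mu> \<nu> :: "'a set \<Rightarrow> real"
    unfolding NN_def using that by (intro SUP_cong) (auto simp: UB_def)
  have P1: "\<forall>\<mu>\<in>Meas. \<forall>\<nu>\<in>Meas. fmu K \<mu> = fmu K \<nu> \<longrightarrow> tv_norm \<mu> = tv_norm \<nu>"
    using tvN NN_cong wd by metis
  have normB_eq: "normB K (fmu K \<mu>) = NN \<mu>" if "\<mu> \<in> Meas" for \<mu>
  proof -
    let ?\<nu> = "SOME \<nu>. \<nu> \<in> Meas \<and> fmu K \<mu> = fmu K \<nu>"
    have "?\<nu> \<in> Meas \<and> fmu K \<mu> = fmu K ?\<nu>" by (rule someI[of _ \<mu>]) (use that in simp)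
    then show ?thesis unfolding normB_def using tvN that P1 by metis
  qed
  have Bsp: "\<exists>\<mu>\<in>Meas. f = fmu K \<mu>" if "f \<in> Bspace K" for f
    using that by (auto simp: Bspace_def)
  have inB: "fmu K \<mu> \<in> Bspace K" if "\<mu> \<in> Meas" for \<mu>
    using that by (auto simp: Bspace_def)
  obtain z :: "'a set \<Rightarrow> real" where z: "z \<in> Meas" "\<forall>f\<in>C0. sintegral z f = 0"
    using rep[of 0 "\<lambda>_. 0" 0 "\<lambda>_. 0"] by auto
  have fz: "fmu K z = (\<lambda>x. 0)" using z K_C0 by (auto simp: fmu_def)
  have P2: "(\<lambda>x. 0) \<in> Bspace K" using inB[OF z(1)] fz by simp
  have NNz: "NN z = 0"
  proof -
    have "NN z = (SUP f\<in>(UB::('a \<Rightarrow> real) set). \<bar>0::real\<bar>)" unfolding NN_def using z(2)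
      by (intro SUP_cong) (auto simp: UB_def)
    moreover have "(UB::('a \<Rightarrow> real) set) \<noteq> {}" by (rule UB_ne(2))
    ultimately show ?thesis by simp
  qed
  have P3: "\<forall>f\<in>Bspace K. \<forall>g\<in>Bspace K. (\<lambda>x. f x + g x) \<in> Bspace K"
  proof (intro ballI)
    fix f g assume "f \<in> Bspace K" "g \<in> Bspace K"
    then obtain \<mu> \<nu> where mn: "\<mu> \<in> Meas" "\<nu> \<in> Meas" "f = fmu K \<mu>" "g = fmu K \<nu>" using Bsp by metis
    obtain la where la: "la \<in> Meas" "\<forall>f\<in>C0. sintegral la f = 1 * sintegral \<mu> f + 1 * sintegral \<nu> f"
      using rep by blast
    show "(\<lambda>x. f x + g x) \<in> Bspace K" using inB[OF la(1)] fmu_comb[OF la(2)] mn by simp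
  qed
  have P4: "\<forall>c. \<forall>f\<in>Bspace K. (\<lambda>x. c * f x) \<in> Bspace K"
  proof (intro allI ballI)
    fix c f assume "f \<in> Bspace K"
    then obtain \<mu> where mn: "\<mu> \<in> Meas" "f = fmu K \<mu>" using Bsp by metis
    obtain la where la: "la \<in> Meas" "\<forall>f\<in>C0. sintegral la f = c * sintegral \<mu> f + 0 * sintegral \<mu> f"
      using rep by blast
    show "(\<lambda>x. c * f x) \<in> Bspace K" using inB[OF la(1)] fmu_comb[OF la(2)] mn by simp
  qed
  have P5: "\<forall>f\<in>Bspace K. normB K f \<ge> 0"
    using Bsp normB_eq N_nonneg by metis
  have P6: "\<forall>f\<in>Bspace K. \<forall>g\<in>Bspace K. normB K (\<lambda>x. f x + g x) \<le> normB K f + normB K g"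
  proof (intro ballI)
    fix f g assume "f \<in> Bspace K" "g \<in> Bspace K"
    then obtain \<mu> \<nu> where mn: "\<mu> \<in> Meas" "\<nu> \<in> Meas" "f = fmu K \<mu>" "g = fmu K \<nu>" using Bsp by metis
    obtain la where la: "la \<in> Meas" "\<forall>f\<in>C0. sintegral la f = 1 * sintegral \<mu> f + 1 * sintegral \<nu> f"
      using rep by blast
    have e: "(\<lambda>x. f x + g x) = fmu K la" using fmu_comb[OF la(2)] mn by simp
    have "NN la \<le> NN \<mu> + NN \<nu>"
    proof (rule N_le)
      fix h :: "'a \<Rightarrow> real" assume h: "h \<in> UB"
      then have "sintegral la h = sintegral \<mu> h + sintegral \<nu> h" using la(2) by (auto simp: UB_def)
      then show "\<bar>sintegral la h\<bar> \<le> NN \<mu> + NN \<nu>"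
        using N_ge[OF h, of \<mu>] N_ge[OF h, of \<nu>] by linarith
    qed
    then show "normB K (\<lambda>x. f x + g x) \<le> normB K f + normB K g"
      using e normB_eq la(1) mn by simp
  qed
  have P7: "\<forall>c. \<forall>f\<in>Bspace K. normB K (\<lambda>x. c * f x) = \<bar>c\<bar> * normB K f"
  proof (intro allI ballI)
    fix c f assume "f \<in> Bspace K"
    then obtain \<mu> where mn: "\<mu> \<in> Meas" "f = fmu K \<mu>" using Bsp by metis
    obtain la where la: "la \<in> Meas" "\<forall>f\<in>C0. sintegral la f = c * sintegral \<mu> f + 0 * sintegral \<mu> f"
      using rep by blast
    have e: "(\<lambda>x. c * f x) = fmu K la" using fmu_comb[OF la(2)] mn by simp
    have "NN la = (SUP h\<in>UB. \<bar>c\<bar> * \<bar>sintegral \<mu> h\<bar>)" unfolding NN_def using la(2)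
      by (intro SUP_cong) (auto simp: UB_def abs_mult)
    also have "\<dots> = \<bar>c\<bar> * NN \<mu>" unfolding NN_def
      by (rule sup_scale[OF UB_ne(2) N_bdd]) simp
    finally show "normB K (\<lambda>x. c * f x) = \<bar>c\<bar> * normB K f"
      using e normB_eq la(1) mn by simp
  qed
  have P9: "\<forall>x. \<exists>C. \<forall>f\<in>Bspace K. \<bar>f x\<bar> \<le> C * normB K f"
  proof
    fix x
    show "\<exists>C. \<forall>f\<in>Bspace K. \<bar>f x\<bar> \<le> C * normB K f"
    proof (intro exI ballI)
      fix f assume "f \<in> Bspace K"
      then obtain \<mu> where mn: "\<mu> \<in> Meas" "f = fmu K \<mu>" using Bsp by metis
      have "\<bar>f x\<bar> \<le> NN \<mu> * C0_norm (\<lambda>t. K t x)"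
        using N_op[OF K_C0[rule_format, of x], of \<mu>] mn by (simp add: fmu_def)
      then show "\<bar>f x\<bar> \<le> C0_norm (\<lambda>t. K t x) * normB K f" using normB_eq mn by (simp add: mult.commute)
    qed
  qed
  have P10: "\<forall>f\<in>Bspace K. normB K f = 0 \<longleftrightarrow> (\<forall>x. f x = 0)"
  proof (intro ballI iffI allI)
    fix f x assume f: "f \<in> Bspace K" and n0: "normB K f = 0"
    obtain C where "\<forall>f\<in>Bspace K. \<bar>f x\<bar> \<le> C * normB K f" using P9 by blast
    then show "f x = 0" using f n0 by fastforce
  next
    fix f assume f: "f \<in> Bspace K" and z0: "\<forall>x. f x = 0"
    then obtain \<mu> where mn: "\<mu> \<in> Meas" "f = fmu K \<mu>" using Bsp by metis
    have "fmu K \<mu> = fmu K z" using fz z0 mn by auto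
    then have "NN \<mu> = NN z" using wd NN_cong by metis
    then show "normB K f = 0" using NNz normB_eq mn by simp
  qed
  have diffrep: "\<exists>lb\<in>Meas. (\<forall>f\<in>C0. sintegral lb f = sintegral \<alpha> f - sintegral \<beta> f) \<and>
      normB K (\<lambda>x. fmu K \<alpha> x - fmu K \<beta> x) = NN lb" if "\<alpha> \<in> Meas" "\<beta> \<in> Meas" for \<alpha> \<beta>
  proof -
    obtain la where la: "la \<in> Meas" "\<forall>f\<in>C0. sintegral la f = 1 * sintegral \<alpha> f + (-1) * sintegral \<beta> f"
      using rep by blast
    have e: "(\<lambda>x. fmu K \<alpha> x - fmu K \<beta> x) = fmu K la" using fmu_comb[OF la(2)] by simp
    show ?thesis using la e normB_eq[OF la(1)] by (intro bexI[of _ la]) auto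
  qed
  have P8: "(\<forall>F::nat \<Rightarrow> 'a \<Rightarrow> real. (\<forall>n. F n \<in> Bspace K) \<and>
        (\<forall>\<epsilon>>0. \<exists>N. \<forall>m\<ge>N. \<forall>n\<ge>N. normB K (\<lambda>x. F m x - F n x) < \<epsilon>) \<longrightarrow>
        (\<exists>f\<in>Bspace K. (\<lambda>n. normB K (\<lambda>x. F n x - f x)) \<longlonglongrightarrow> 0))"
  proof (intro allI impI)
    fix F :: "nat \<Rightarrow> 'a \<Rightarrow> real"
    assume H: "(\<forall>n. F n \<in> Bspace K) \<and>
        (\<forall>\<epsilon>>0. \<exists>N. \<forall>m\<ge>N. \<forall>n\<ge>N. normB K (\<lambda>x. F m x - F n x) < \<epsilon>)"
    have "\<forall>n. \<exists>m. m \<in> Meas \<and> F n = fmu K m" using H Bsp by metis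
    then obtain \<mu> where \<mu>: "\<And>n. \<mu> n \<in> Meas" "\<And>n. F n = fmu K (\<mu> n)" by metis
    let ?L = "\<lambda>n f. sintegral (\<mu> n) f"
    have CC: "\<exists>N. \<forall>m\<ge>N. \<forall>n\<ge>N. \<forall>f\<in>C0. \<bar>?L m f - ?L n f\<bar> \<le> \<epsilon> * C0_norm f" if e: "\<epsilon> > 0" for \<epsilon>
    proof -
      obtain N where N: "\<forall>m\<ge>N. \<forall>n\<ge>N. normB K (\<lambda>x. F m x - F n x) < \<epsilon>" using H e by blast
      have "\<forall>f\<in>C0. \<bar>?L m f - ?L n f\<bar> \<le> \<epsilon> * C0_norm f" if "m \<ge> N" "n \<ge> N" for m n
      proof
        fix f :: "'a \<Rightarrow> real" assume f: "f \<in> C0"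
        obtain lb where lb: "lb \<in> Meas" "\<forall>f\<in>C0. sintegral lb f = ?L m f - ?L n f"
          "normB K (\<lambda>x. F m x - F n x) = NN lb"
          using diffrep[OF \<mu>(1) \<mu>(1), of m n] \<mu>(2) by auto
        have "NN lb < \<epsilon>" using N[rule_format, OF that] lb(3) by simp
        then have "NN lb * C0_norm f \<le> \<epsilon> * C0_norm f"
          by (intro mult_right_mono C0_norm_nonneg C0_G f) simp
        then show "\<bar>?L m f - ?L n f\<bar> \<le> \<epsilon> * C0_norm f" using N_op[OF f, of lb] lb(2) f by simp
      qed
      then show ?thesis by blast
    qed
    define T where "T f = lim (\<lambda>n. ?L n f)" for f
    have Tlim: "(\<lambda>n. ?L n f) \<longlonglongrightarrow> T f" if f: "f \<in> C0" for f
    proof -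
      have "Cauchy (\<lambda>n. ?L n f)"
      proof (rule CauchyI)
        fix e :: real assume e: "e > 0"
        define c where "c = C0_norm f"
        have c0: "c \<ge> 0" using C0_norm_nonneg[OF C0_G[OF f]] by (simp add: c_def)
        obtain N where N: "\<forall>m\<ge>N. \<forall>n\<ge>N. \<forall>f\<in>C0. \<bar>?L m f - ?L n f\<bar> \<le> (e / (c + 1)) * C0_norm f"
          using CC[of "e / (c + 1)"] e c0 by auto
        have "(e / (c + 1)) * c < e" using e c0 by (simp add: field_simps)
        have "\<forall>m\<ge>N. \<forall>n\<ge>N. norm (?L m f - ?L n f) < e"
        proof (intro allI impI)
          fix m n assume "m \<ge> N" "n \<ge> N"
          then have "\<bar>?L m f - ?L n f\<bar> \<le> (e / (c + 1)) * c" using N f c_def by blast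
          then show "norm (?L m f - ?L n f) < e" using \<open>(e / (c + 1)) * c < e\<close> by simp
        qed
        then show "\<exists>M. \<forall>m\<ge>M. \<forall>n\<ge>M. norm (?L m f - ?L n f) < e" by blast
      qed
      then show ?thesis unfolding T_def using Cauchy_convergent_iff convergent_LIMSEQ_iff by blast
    qed
    have T_add: "\<forall>f\<in>C0. \<forall>g\<in>C0. T (\<lambda>x. f x + g x) = T f + T g"
    proof (intro ballI)
      fix f g :: "'a \<Rightarrow> real" assume f: "f \<in> C0" and g: "g \<in> C0"
      have "(\<lambda>n. ?L n (\<lambda>x. f x + g x)) = (\<lambda>n. ?L n f + ?L n g)"
        using si_add[OF C0_G[OF f] C0_G[OF g]] by simp
      then show "T (\<lambda>x. f x + g x) = T f + T g" unfolding T_def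
        using tendsto_add[OF Tlim[OF f] Tlim[OF g]] limI unfolding T_def by metis
    qed
    have T_mult: "\<forall>c. \<forall>f\<in>C0. T (\<lambda>x. c * f x) = c * T f"
    proof (intro allI ballI)
      fix c and f :: "'a \<Rightarrow> real" assume f: "f \<in> C0"
      have "(\<lambda>n. ?L n (\<lambda>x. c * f x)) = (\<lambda>n. c * ?L n f)" by (simp add: si_mult)
      then show "T (\<lambda>x. c * f x) = c * T f"
        using tendsto_mult_left[OF Tlim[OF f], of c] limI unfolding T_def by metis
    qed
    have T_bound: "\<exists>C. \<forall>f\<in>C0. \<bar>T f\<bar> \<le> C * C0_norm f"
    proof -
      obtain N1 where N1: "\<forall>m\<ge>N1. \<forall>n\<ge>N1. \<forall>f\<in>C0. \<bar>?L m f - ?L n f\<bar> \<le> 1 * C0_norm f"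
        using CC[of 1] by auto
      have "\<bar>T f\<bar> \<le> (NN (\<mu> N1) + 1) * C0_norm f" if f: "f \<in> C0" for f
      proof (rule tendsto_upperbound[OF tendsto_rabs[OF Tlim[OF f]]])
        show "sequentially \<noteq> bot" by simp
        show "\<forall>\<^sub>F n in sequentially. \<bar>?L n f\<bar> \<le> (NN (\<mu> N1) + 1) * C0_norm f"
        proof (rule eventually_sequentiallyI[of N1])
          fix n assume "n \<ge> N1"
          then have "\<bar>?L n f - ?L N1 f\<bar> \<le> 1 * C0_norm f" using N1 f by blast
          moreover have "\<bar>?L N1 f\<bar> \<le> NN (\<mu> N1) * C0_norm f" by (rule N_op[OF f])
          ultimately show "\<bar>?L n f\<bar> \<le> (NN (\<mu> N1) + 1) * C0_norm f" by (simp add: algebra_simps)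
        qed
      qed
      then show ?thesis by blast
    qed
    obtain la where la: "la \<in> Meas" "\<forall>f\<in>C0. T f = sintegral la f"
      using dual_onto[rule_format, of T] T_add T_mult T_bound by blast
    show "\<exists>f\<in>Bspace K. (\<lambda>n. normB K (\<lambda>x. F n x - f x)) \<longlonglongrightarrow> 0"
    proof (intro bexI[OF _ inB[OF la(1)]] LIMSEQ_I)
      fix r :: real assume r: "r > 0"
      obtain N where N: "\<forall>m\<ge>N. \<forall>n\<ge>N. \<forall>f\<in>C0. \<bar>?L m f - ?L n f\<bar> \<le> (r/2) * C0_norm f"
        using CC[of "r/2"] r by auto
      have "norm (normB K (\<lambda>x. F n x - fmu K la x) - 0) < r" if n: "n \<ge> N" for n
      proof -
        obtain lb where lb: "lb \<in> Meas" "\<forall>f\<in>C0. sintegral lb f = ?L n f - sintegral la f"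
          "normB K (\<lambda>x. F n x - fmu K la x) = NN lb"
          using diffrep[OF \<mu>(1) la(1), of n] \<mu>(2) by auto
        have "NN lb \<le> r/2"
        proof (rule N_le)
          fix f :: "'a \<Rightarrow> real" assume f: "f \<in> UB"
          have fC: "f \<in> C0" and f1: "C0_norm f \<le> 1" using f by (auto simp: UB_def)
          have "\<bar>?L n f - T f\<bar> \<le> r/2"
          proof (rule tendsto_upperbound[OF tendsto_rabs[OF tendsto_diff[OF tendsto_const Tlim[OF fC]]]])
            show "sequentially \<noteq> bot" by simp
            show "\<forall>\<^sub>F m in sequentially. \<bar>?L n f - ?L m f\<bar> \<le> r/2"
            proof (rule eventually_sequentiallyI[of N])
              fix m assume "m \<ge> N"
              then have "\<bar>?L n f - ?L m f\<bar> \<le> (r/2) * C0_norm f" using N n fC by blast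
              also have "\<dots> \<le> (r/2) * 1" using f1 r by (intro mult_left_mono) auto
              finally show "\<bar>?L n f - ?L m f\<bar> \<le> r/2" by simp
            qed
          qed
          then show "\<bar>sintegral lb f\<bar> \<le> r/2" using lb(2) la(2) fC by simp
        qed
        then show ?thesis using lb(3) N_nonneg[of lb] r by simp
      qed
      then show "\<exists>no. \<forall>n\<ge>no. norm (normB K (\<lambda>x. F n x - fmu K la x) - 0) < r" by blast
    qed
  qed
  show ?thesis using P1 P2 P3 P4 P5 P6 P7 P8 P9 P10 by (intro conjI)
qed
end
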